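(* Let $c\in(-1,0]$ and let $x,y,z\in[c,1]$ satisfy $x+yz\ge0$, $y+xz\ge0$, $z+xy\ge0$. Then $$2-x^2-y^2+x+yz+y+xz+z+xy\ge 1+c.$$ *)

theory Defs
  imports Complex_Main
begin

end

theory Submission
  imports Defs
begin

theorem proposition3p1:
  fixes c x y z :: real
  assumes "-1 < c" and "c \<le> 0"
    and "x \<in> {c..1}" and "y \<in> {c..1}" and "z \<in> {c..1}"
    and "x + y * z \<ge> 0" and "y + x * z \<ge> 0" and "z + x * y \<ge> 0"
  shows "2 - x^2 - y^2 + x + y * z + y + x * z + z + x * y \<ge> 1 + c"
proof -
  have x: "c \<le> x" "x \<le> 1" and y: "c \<le> y" "y \<le> 1" and z: "c \<le> z" "z \<le> 1"
    using assms by auto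
  have sx: "x^2 \<le> 1"
  proof -
    have "0 \<le> (1 - x) * (1 + x)" using x assms(1) by simp
    thus ?thesis by (simp add: algebra_simps power2_eq_square)
  qed
  have sy: "y^2 \<le> 1"
  proof -
    have "0 \<le> (1 - y) * (1 + y)" using y assms(1) by simp
    thus ?thesis by (simp add: algebra_simps power2_eq_square)
  qed
  consider (pos) "x \<ge> 0" "y \<ge> 0" "z \<ge> 0" | (neg) "x \<le> 0" "y \<le> 0" "z \<le> 0"
    | (zn) "z < 0" "x \<ge> 0" "y \<ge> 0" | (xn) "x < 0" "y \<ge> 0" "z \<ge> 0"
    | (yn) "y < 0" "x \<ge> 0" "z \<ge> 0"
  proof -
    have "\<not> (x < 0 \<and> y \<ge> 0 \<and> z < 0)"
    proof
      assume h: "x < 0 \<and> y \<ge> 0 \<and> z < 0"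
      hence "y * z \<le> 0" by (simp add: mult_nonneg_nonpos)
      thus False using h assms(6) by linarith
    qed
    moreover have "\<not> (x \<ge> 0 \<and> y < 0 \<and> z < 0)"
    proof
      assume h: "x \<ge> 0 \<and> y < 0 \<and> z < 0"
      hence "x * z \<le> 0" by (simp add: mult_nonneg_nonpos)
      thus False using h assms(7) by linarith
    qed
    moreover have "\<not> (x < 0 \<and> y < 0 \<and> z \<ge> 0)"
    proof
      assume h: "x < 0 \<and> y < 0 \<and> z \<ge> 0"
      hence "y * z \<le> 0" by (simp add: mult_nonpos_nonneg)
      thus False using h assms(6) by linarith
    qed
    ultimately show ?thesis using that by linarith
  qed
  then show ?thesis
  proof cases
    case pos
    have "x^2 \<le> x" using pos x by (simp add: power2_eq_square mult_left_le)
    moreover have "y^2 \<le> y" using pos y by (simp add: power2_eq_square mult_left_le)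
    moreover have "0 \<le> x*y" "0 \<le> y*z" "0 \<le> x*z" using pos by auto
    ultimately show ?thesis using assms(2) pos by linarith
  next
    case neg
    have "x^2 \<le> c*x" using neg x by (simp add: power2_eq_square mult_right_mono_neg)
    moreover have "c*x \<le> c*c" using neg x assms(2) by (simp add: mult_left_mono_neg)
    moreover have "y^2 \<le> c*y" using neg y by (simp add: power2_eq_square mult_right_mono_neg)
    moreover have "c*y \<le> c*c" using neg y assms(2) by (simp add: mult_left_mono_neg)
    moreover have "0 \<le> (1 + c) * (1 - 2*c)" using assms(1,2) by simp
    ultimately show ?thesis using assms(6,7,8) by (simp add: algebra_simps)
  next
    case zn
    have "x^2 \<le> x" using zn x by (simp add: power2_eq_square mult_left_le)
    moreover have "y^2 \<le> y" using zn y by (simp add: power2_eq_square mult_left_le)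
    moreover have "c * (1 + x + y) \<le> z * (1 + x + y)" using zn z by (intro mult_right_mono) auto
    moreover have "0 \<le> (1 - x) * (1 - y)" using x y by simp
    moreover have "-1 * (x + y) \<le> c * (x + y)" using zn assms(1) by (intro mult_right_mono) auto
    ultimately show ?thesis by (simp add: algebra_simps)
  next
    case xn
    have "y^2 \<le> y" using xn y by (simp add: power2_eq_square mult_left_le)
    moreover have "x \<le> x * y" using xn y by (simp add: mult_le_cancel_left1)
    moreover have "0 \<le> z * (1 + x)" using xn \<open>c \<le> x\<close> assms(1) by simp
    ultimately show ?thesis using sx assms(6) \<open>c \<le> x\<close> by (simp add: algebra_simps)
  next
    case yn
    have "x^2 \<le> x" using yn x by (simp add: power2_eq_square mult_left_le)
    moreover have "y \<le> x * y" using yn x by (simp add: mult_le_cancel_right1)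
    moreover have "0 \<le> z * (1 + y)" using yn \<open>c \<le> y\<close> assms(1) by simp
    ultimately show ?thesis using sy assms(7) \<open>c \<le> y\<close> by (simp add: algebra_simps)
  qed
qed

end
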